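(* Let $S\subseteq\mathcal X$ be a finite nonempty set of candidates. The look-up based CF algorithm $$A_{\mathrm{LU}}(x)=\operatorname*{argmin}_{x'\in S} c(x,x'),$$ where ties among minimizers are broken by a fixed deterministic rule (a fixed total order on $S$, independent of $x$), is IPF stable globally.
   Context: Input space $\mathcal X=\mathcal X_1\times\cdots\times\mathcal X_D$, where each feature $d$ is either categorical ($\mathcal X_d$ a finite set) or numerical ($\mathcal X_d\subseteq\mathbb R$). Cost: $c(x,x')=\sum_{d=1}^D c_d(x_d,x'_d)$ with $c_d(x_d,x'_d)=\mathbb 1\{x_d\neq x'_d\}$ for categorical $d$ and $c_d(x_d,x'_d)=|F_d(x_d)-F_d(x'_d)|$ for numerical $d$, where $F_d$ is a fixed cumulative distribution function (nondecreasing) of feature $d$. A CF algorithm $A$ maps each $x\in\mathcal X$ to a probability distribution over $\mathcal X$; $A$ is deterministic at $x$ if this distribution is a point mass, written $A(x)$. $\Phi(x,x')$ denotes the set of all $w\in\mathcal X$ such that for each numerical $d$, $w_d$ lies in the closed interval between $x_d$ and $x'_d$, and for each categorical $d$, $w_d\in\{x_d,x'_d\}$. IPF stable: $A$ is IPF stable at $x$ if (1) $A$ is deterministic at $x$, and (2) for all $w\in\Phi(x,A(x))$, $A$ is deterministic at $w$ and $A(w)=A(x)$. $A$ is IPF stable globally if it is IPF stable at every $x\in\mathcal X$. *)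

theory Defs
  imports "HOL-Probability.Probability_Mass_Function" "HOL-Library.FuncSet"
begin

text \<open>Points of the input space are functions nat => real restricted (extensionally)
  to the feature indices 0..<D. Categorical feature values are encoded as reals;
  cat d says that feature d is categorical, Xd d is the domain of feature d.\<close>

definition input_space :: "nat \<Rightarrow> (nat \<Rightarrow> real set) \<Rightarrow> (nat \<Rightarrow> real) set" where
  "input_space D Xd = PiE {..<D} Xd"

definition is_cdf :: "(real \<Rightarrow> real) \<Rightarrow> bool" where
  "is_cdf G \<longleftrightarrow> mono G \<and> (\<forall>a. continuous (at_right a) G)
      \<and> (G \<longlongrightarrow> 0) at_bot \<and> (G \<longlongrightarrow> 1) at_top"

definition cost :: "nat \<Rightarrow> (nat \<Rightarrow> bool) \<Rightarrow> (nat \<Rightarrow> real \<Rightarrow> real)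
    \<Rightarrow> (nat \<Rightarrow> real) \<Rightarrow> (nat \<Rightarrow> real) \<Rightarrow> real" where
  "cost D cat F x x' = (\<Sum>d<D. if cat d then (if x d = x' d then 0 else 1)
                                 else \<bar>F d (x d) - F d (x' d)\<bar>)"

definition Phi :: "nat \<Rightarrow> (nat \<Rightarrow> bool) \<Rightarrow> (nat \<Rightarrow> real set)
    \<Rightarrow> (nat \<Rightarrow> real) \<Rightarrow> (nat \<Rightarrow> real) \<Rightarrow> (nat \<Rightarrow> real) set" where
  "Phi D cat Xd x x' = {w \<in> input_space D Xd. \<forall>d<D.
       (if cat d then w d \<in> {x d, x' d}
        else w d \<in> {min (x d) (x' d) .. max (x d) (x' d)})}"

definition deterministic_at :: "('a \<Rightarrow> 'a pmf) \<Rightarrow> 'a \<Rightarrow> bool" where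
  "deterministic_at A x \<longleftrightarrow> (\<exists>y. A x = return_pmf y)"

definition det_out :: "('a \<Rightarrow> 'a pmf) \<Rightarrow> 'a \<Rightarrow> 'a" where
  "det_out A x = (THE y. A x = return_pmf y)"

definition IPF_stable_at :: "nat \<Rightarrow> (nat \<Rightarrow> bool) \<Rightarrow> (nat \<Rightarrow> real set)
    \<Rightarrow> ((nat \<Rightarrow> real) \<Rightarrow> (nat \<Rightarrow> real) pmf) \<Rightarrow> (nat \<Rightarrow> real) \<Rightarrow> bool" where
  "IPF_stable_at D cat Xd A x \<longleftrightarrow> deterministic_at A x \<and>
     (\<forall>w \<in> Phi D cat Xd x (det_out A x).
        deterministic_at A w \<and> det_out A w = det_out A x)"

definition IPF_stable_globally :: "nat \<Rightarrow> (nat \<Rightarrow> bool) \<Rightarrow> (nat \<Rightarrow> real set)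
    \<Rightarrow> ((nat \<Rightarrow> real) \<Rightarrow> (nat \<Rightarrow> real) pmf) \<Rightarrow> bool" where
  "IPF_stable_globally D cat Xd A \<longleftrightarrow>
     (\<forall>x \<in> input_space D Xd. IPF_stable_at D cat Xd A x)"

definition lookup_choice :: "('a \<Rightarrow> 'a \<Rightarrow> real) \<Rightarrow> 'a set \<Rightarrow> ('a \<times> 'a) set \<Rightarrow> 'a \<Rightarrow> 'a" where
  "lookup_choice c S R x = (THE y. y \<in> S \<and> (\<forall>z\<in>S. c x y \<le> c x z)
       \<and> (\<forall>z\<in>S. c x z = c x y \<longrightarrow> (y, z) \<in> R))"

end

theory Submission
  imports Defs
begin

lemma lc_exists:
  fixes c :: "'a \<Rightarrow> 'a \<Rightarrow> real"
  assumes "finite S" "S \<noteq> {}" "linear_order_on S R"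
  shows "\<exists>y. y \<in> S \<and> (\<forall>z\<in>S. c x y \<le> c x z) \<and> (\<forall>z\<in>S. c x z = c x y \<longrightarrow> (y, z) \<in> R)"
proof -
  from assms have refl: "refl_on S R" and tr: "trans R" and tot: "total_on S R"
    by (auto simp: linear_order_on_def partial_order_on_def preorder_on_def)
  define m where "m = Min (c x ` S)"
  have mle: "\<And>z. z \<in> S \<Longrightarrow> m \<le> c x z" using assms(1) unfolding m_def by simp
  have "m \<in> c x ` S" using assms(1,2) unfolding m_def by simp
  define M where "M = {y\<in>S. c x y = m}"
  have Mfin: "finite M" "M \<noteq> {}" "M \<subseteq> S" using assms(1) \<open>m \<in> c x ` S\<close> unfolding M_def by auto
  have "\<exists>y\<in>M. \<forall>z\<in>M. (y, z) \<in> R" using Mfin(1,2,3)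
  proof (induction M rule: finite_ne_induct)
    case (singleton a) then show ?case using refl by (auto simp: refl_on_def)
  next
    case (insert a M')
    then obtain y where y: "y \<in> M'" "\<forall>z\<in>M'. (y, z) \<in> R" by auto
    have aS: "a \<in> S" and yS: "y \<in> S" using insert y by auto
    show ?case
    proof (cases "(a, y) \<in> R")
      case True
      then show ?thesis using y tr refl aS by (auto simp: refl_on_def intro: transD[OF tr])
    next
      case False
      then have "a = y \<or> (y, a) \<in> R" using tot aS yS by (auto simp: total_on_def)
      then show ?thesis using y refl aS by (auto simp: refl_on_def)
    qed
  qed
  then obtain y where y: "y \<in> M" "\<forall>z\<in>M. (y, z) \<in> R" by auto
  show ?thesis
    apply (rule exI[of _ y])
    using y mle unfolding M_def by auto
qed

lemma lc_prop:
  fixes c :: "'a \<Rightarrow> 'a \<Rightarrow> real"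
  assumes "finite S" "S \<noteq> {}" "linear_order_on S R"
    and "y \<in> S" "\<forall>z\<in>S. c x y \<le> c x z" "\<forall>z\<in>S. c x z = c x y \<longrightarrow> (y, z) \<in> R"
  shows "lookup_choice c S R x = y"
  unfolding lookup_choice_def
proof (rule the_equality)
  show "y \<in> S \<and> (\<forall>z\<in>S. c x y \<le> c x z) \<and> (\<forall>z\<in>S. c x z = c x y \<longrightarrow> (y, z) \<in> R)"
    using assms by auto
next
  fix y' assume h: "y' \<in> S \<and> (\<forall>z\<in>S. c x y' \<le> c x z) \<and> (\<forall>z\<in>S. c x z = c x y' \<longrightarrow> (y', z) \<in> R)"
  have "c x y = c x y'" using h assms by (meson order_antisym)
  then have "(y, y') \<in> R" "(y', y) \<in> R" using h assms by auto
  moreover have "antisym R" using assms(3) by (auto simp: linear_order_on_def partial_order_on_def)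
  ultimately show "y' = y" by (auto dest: antisymD)
qed

lemma lc_spec:
  fixes c :: "'a \<Rightarrow> 'a \<Rightarrow> real"
  assumes "finite S" "S \<noteq> {}" "linear_order_on S R"
  shows "lookup_choice c S R x \<in> S \<and> (\<forall>z\<in>S. c x (lookup_choice c S R x) \<le> c x z)
     \<and> (\<forall>z\<in>S. c x z = c x (lookup_choice c S R x) \<longrightarrow> (lookup_choice c S R x, z) \<in> R)"
proof -
  obtain y where "y \<in> S \<and> (\<forall>z\<in>S. c x y \<le> c x z) \<and> (\<forall>z\<in>S. c x z = c x y \<longrightarrow> (y, z) \<in> R)"
    using lc_exists[OF assms] by blast
  moreover then have "lookup_choice c S R x = y" using lc_prop[OF assms] by blast
  ultimately show ?thesis by simp
qed

lemma cost_tri: "cost D cat F x z \<le> cost D cat F x w + cost D cat F w z"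
  unfolding cost_def sum.distrib[symmetric]
  by (rule sum_mono) auto

lemma cost_add:
  assumes "\<And>d. d < D \<Longrightarrow> \<not> cat d \<Longrightarrow> mono (F d)"
    and "w \<in> Phi D cat Xd x y"
  shows "cost D cat F x y = cost D cat F x w + cost D cat F w y"
  unfolding cost_def sum.distrib[symmetric]
proof (rule sum.cong[OF refl])
  fix d assume "d \<in> {..<D}"
  then have d: "d < D" by simp
  show "(if cat d then if x d = y d then 0 else 1 else \<bar>F d (x d) - F d (y d)\<bar>) =
        (if cat d then if x d = w d then 0 else 1 else \<bar>F d (x d) - F d (w d)\<bar>) +
        (if cat d then if w d = y d then 0 else 1 else \<bar>F d (w d) - F d (y d)\<bar>)"
  proof (cases "cat d")
    case True
    then have "w d \<in> {x d, y d}" using assms(2) d unfolding Phi_def by auto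
    then show ?thesis using True by auto
  next
    case False
    then have wd: "min (x d) (y d) \<le> w d" "w d \<le> max (x d) (y d)"
      using assms(2) d unfolding Phi_def by auto
    have m: "mono (F d)" using assms(1) d False by auto
    show ?thesis
    proof (cases "x d \<le> y d")
      case True
      then have "F d (x d) \<le> F d (w d)" "F d (w d) \<le> F d (y d)"
        using wd m by (auto simp: mono_def)
      then show ?thesis using False by auto
    next
      case f2: False
      then have "F d (y d) \<le> F d (w d)" "F d (w d) \<le> F d (x d)"
        using wd m by (auto simp: mono_def)
      then show ?thesis using False by auto
    qed
  qed
qed

theorem theorem3:
  fixes D :: nat and cat :: "nat \<Rightarrow> bool" and Xd :: "nat \<Rightarrow> real set"
    and F :: "nat \<Rightarrow> real \<Rightarrow> real"
    and S :: "(nat \<Rightarrow> real) set" and R :: "((nat \<Rightarrow> real) \<times> (nat \<Rightarrow> real)) set"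
  assumes "\<And>d. d < D \<Longrightarrow> cat d \<Longrightarrow> finite (Xd d)"
    and "\<And>d. d < D \<Longrightarrow> \<not> cat d \<Longrightarrow> is_cdf (F d)"
    and "S \<subseteq> input_space D Xd" and "finite S" and "S \<noteq> {}"
    and "linear_order_on S R"
  shows "IPF_stable_globally D cat Xd
           (\<lambda>x. return_pmf (lookup_choice (cost D cat F) S R x))"
  unfolding IPF_stable_globally_def IPF_stable_at_def deterministic_at_def det_out_def
proof (rule ballI, rule conjI)
  fix x :: "nat \<Rightarrow> real"
  let ?c = "cost D cat F"
  let ?y = "lookup_choice ?c S R x"
  show "\<exists>y. return_pmf ?y = return_pmf y" by blast
  have mon: "\<And>d. d < D \<Longrightarrow> \<not> cat d \<Longrightarrow> mono (F d)" using assms(2) by (simp add: is_cdf_def)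
  have ty: "(THE y. return_pmf ?y = return_pmf y) = ?y" by simp
  show "\<forall>w\<in>Phi D cat Xd x (THE y. return_pmf ?y = return_pmf y).
          (\<exists>y. return_pmf (lookup_choice ?c S R w) = return_pmf y) \<and>
          (THE y. return_pmf (lookup_choice ?c S R w) = return_pmf y) =
          (THE y. return_pmf ?y = return_pmf y)"
    unfolding ty
  proof (intro ballI)
    fix w assume w: "w \<in> Phi D cat Xd x ?y"
    have sp: "?y \<in> S" "\<forall>z\<in>S. ?c x ?y \<le> ?c x z" "\<forall>z\<in>S. ?c x z = ?c x ?y \<longrightarrow> (?y, z) \<in> R"
      using lc_spec[OF assms(4,5,6), of ?c x] by auto
    have add: "?c x ?y = ?c x w + ?c w ?y" by (rule cost_add[where F=F, OF mon w])
    have "lookup_choice ?c S R w = ?y"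
    proof (rule lc_prop[where c="?c" and x=w, OF assms(4,5,6) sp(1)])
      show "\<forall>z\<in>S. ?c w ?y \<le> ?c w z"
      proof
        fix z assume "z \<in> S"
        then have "?c x ?y \<le> ?c x z" using sp by auto
        moreover have "?c x z \<le> ?c x w + ?c w z" by (rule cost_tri)
        ultimately show "?c w ?y \<le> ?c w z" using add by linarith
      qed
      show "\<forall>z\<in>S. ?c w z = ?c w ?y \<longrightarrow> (?y, z) \<in> R"
      proof (intro ballI impI)
        fix z assume z: "z \<in> S" "?c w z = ?c w ?y"
        have "?c x ?y \<le> ?c x z" using sp z by auto
        moreover have "?c x z \<le> ?c x w + ?c w z" by (rule cost_tri)
        ultimately have "?c x z = ?c x ?y" using add z by linarith
        then show "(?y, z) \<in> R" using sp z by auto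
      qed
    qed
    then show "(\<exists>y. return_pmf (lookup_choice ?c S R w) = return_pmf y) \<and>
          (THE y. return_pmf (lookup_choice ?c S R w) = return_pmf y) = ?y" by simp
  qed
qed

end
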